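(* Let $\Delta\in\mathbb F^{m\times m}$ be a connection matrix with column/row partition $J_0,\dots,J_b$. Let $\widetilde\Delta^{m-1}$ be the last matrix produced by the Row Cancellation Algorithm (RCA) applied to $\Delta$, and let $\widetilde\Delta(1)^{m-1},\dots,\widetilde\Delta(b)^{m-1}$ be the matrices produced by the Block Sequential Row Cancellation Algorithm applied to $\Delta$. Then $\widetilde\Delta^{m-1}_{J_{k-1}J_k}=\widetilde\Delta(k)^{m-1}_{J_{k-1}J_k}$ for $k=1,\dots,b$, and the set of positions marked as primary pivots in the RCA run on $\Delta$ equals the union over $k$ of the sets of positions marked as primary pivots in the RCA runs on $\widetilde\Delta(k)$.
   Context: Throughout, $\mathbb F$ is a field and $m\ge1$. $A_{IJ}$ is the submatrix of $A$ with rows in $I$ and columns in $J$. $U^{pq}$ is the $m\times m$ matrix whose only nonzero entry is a $1$ in position $(p,q)$. Superscripts on matrices are indices, not powers. A connection matrix (over $\mathbb F$) is a matrix $\Delta\in\mathbb F^{m\times m}$ together with a partition $\{1,\dots,m\}=J_0\sqcup\cdots\sqcup J_b$ (the column/row partition; the $J_k$ need not consist of consecutive integers) such that $\Delta$ is upper triangular, $\Delta\Delta=0$, and $\Delta_{ij}=0$ unless $i<j$ and $(i,j)\in\bigcup_{k=1}^bJ_{k-1}\times J_k$. For $1\le r\le m-1$ the $r$-th diagonal is $\{(j-r,j):r<j\le m\}$. Row Cancellation Algorithm (RCA) applied to a connection matrix $\Delta$: set $\widetilde\Delta^0=\widetilde\Delta^1=\Delta$. For $r=1,\dots,m-1$ in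 turn: (Markup) mark permanently as a primary pivot every position $(j-r,j)$ on the $r$-th diagonal with $\widetilde\Delta^r_{j-r,j}\ne0$ such that no position of column $j$ was marked as a primary pivot at an earlier iteration. (Update, only for $r\le m-2$) If no position was marked at iteration $r$, put $\widetilde T^r=I$; otherwise let $j_1<\cdots<j_t$ be the columns of the positions marked at iteration $r$, let $\widetilde T^{r,s}=I-\sum_{q=j_s+1}^m\frac{\widetilde\Delta^r_{j_s-r,q}}{\widetilde\Delta^r_{j_s-r,j_s}}U^{j_sq}$ and $\widetilde T^r=\widetilde T^{r,1}\cdots\widetilde T^{r,t}$. Set $\widetilde\Delta^{r+1}=(\widetilde T^r)^{-1}\widetilde\Delta^r\widetilde T^r$. Block Sequential Row Cancellation Algorithm applied to $\Delta$: set $\widetilde{\mathcal J}_0=\emptyset$. For $k=1,\dots,b$ in turn: let $\widetilde\Delta(k)$ be the matrix that agrees with $\Delta$ at the positions in $(J_{k-1}\setminus\widetilde{\mathcal J}_{k-1})\times J_k$ and is zero elsewhere (a connection matrix with the same partition); apply RCA to $\widetilde\Delta(k)$, obtaining $\widetilde\Delta(k)^0,\dots,\widetilde\Delta(k)^{m-1}$; let $\widetilde{\mathcal J}_k$ be the set of indices of columns containing primary pivot positions in this run. *)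

theory Defs
  imports "Jordan_Normal_Form.Matrix"
begin

(* Conventions: indices are 0-based, i.e. the paper's index i corresponds to i-1 here;
   matrices are JNF matrices of dimension m x m. *)

definition is_partition :: "nat \<Rightarrow> nat \<Rightarrow> (nat \<Rightarrow> nat set) \<Rightarrow> bool" where
  "is_partition m b J \<longleftrightarrow>
     (\<Union>k\<in>{0..b}. J k) = {..<m} \<and>
     (\<forall>k\<in>{0..b}. \<forall>k'\<in>{0..b}. k \<noteq> k' \<longrightarrow> J k \<inter> J k' = {})"

definition connection_matrix :: "nat \<Rightarrow> nat \<Rightarrow> (nat \<Rightarrow> nat set) \<Rightarrow> 'a::field mat \<Rightarrow> bool" where
  "connection_matrix m b J D \<longleftrightarrow>
     D \<in> carrier_mat m m \<and> is_partition m b J \<and>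
     upper_triangular D \<and> D * D = 0\<^sub>m m m \<and>
     (\<forall>i<m. \<forall>j<m. D $$ (i,j) \<noteq> 0 \<longrightarrow>
        i < j \<and> (\<exists>k\<in>{1..b}. i \<in> J (k-1) \<and> j \<in> J k))"

definition mat_inv :: "nat \<Rightarrow> 'a::field mat \<Rightarrow> 'a mat" where
  "mat_inv m T = (SOME B. B \<in> carrier_mat m m \<and> T * B = 1\<^sub>m m \<and> B * T = 1\<^sub>m m)"

(* positions marked as primary pivots at iteration r, given current matrix D and
   previously marked positions P *)
definition new_pivots :: "nat \<Rightarrow> 'a::field mat \<Rightarrow> (nat \<times> nat) set \<Rightarrow> nat \<Rightarrow> (nat \<times> nat) set" where
  "new_pivots m D P r = {(j - r, j) | j. r \<le> j \<and> j < m \<and> D $$ (j - r, j) \<noteq> 0 \<and>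
                                         (\<forall>i. (i, j) \<notin> P)}"

(* T^{r,s} = I - sum_{q=j_s+1}^{m} (D_{j_s-r,q}/D_{j_s-r,j_s}) U^{j_s q}, written entrywise *)
definition T_elem :: "nat \<Rightarrow> 'a::field mat \<Rightarrow> nat \<Rightarrow> nat \<Rightarrow> 'a mat" where
  "T_elem m D r js = mat m m (\<lambda>(p,q). (if p = q then 1 else 0) -
       (if p = js \<and> js < q then D $$ (js - r, q) / D $$ (js - r, js) else 0))"

(* T^r = T^{r,1} ... T^{r,t} *)
definition T_mat :: "nat \<Rightarrow> 'a::field mat \<Rightarrow> (nat \<times> nat) set \<Rightarrow> nat \<Rightarrow> 'a mat" where
  "T_mat m D N r =
     (if N = {} then 1\<^sub>m m
      else foldr (\<lambda>j A. T_elem m D r j * A) (sorted_list_of_set (snd ` N)) (1\<^sub>m m))"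

definition rca_update :: "nat \<Rightarrow> 'a::field mat \<Rightarrow> (nat \<times> nat) set \<Rightarrow> nat \<Rightarrow> 'a mat" where
  "rca_update m D N r = mat_inv m (T_mat m D N r) * D * T_mat m D N r"

(* rca m D r = (matrix Delta~^{r+1}, set of positions marked in iterations 1..r),
   for r \<le> m-2; rca m D (m-1) = (Delta~^{m-1}, all primary pivot positions). *)
fun rca :: "nat \<Rightarrow> 'a::field mat \<Rightarrow> nat \<Rightarrow> 'a mat \<times> (nat \<times> nat) set" where
  "rca m D 0 = (D, {})"
| "rca m D (Suc r) =
     (let A = fst (rca m D r); P = snd (rca m D r); N = new_pivots m A P (Suc r)
      in (if Suc r \<le> m - 2 then rca_update m A N (Suc r) else A, P \<union> N))"

definition rca_final :: "nat \<Rightarrow> 'a::field mat \<Rightarrow> 'a mat" where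
  "rca_final m D = fst (rca m D (m - 1))"

definition rca_pivots :: "nat \<Rightarrow> 'a::field mat \<Rightarrow> (nat \<times> nat) set" where
  "rca_pivots m D = snd (rca m D (m - 1))"

definition block_restrict :: "nat \<Rightarrow> 'a::field mat \<Rightarrow> nat set \<Rightarrow> nat set \<Rightarrow> nat set \<Rightarrow> 'a mat" where
  "block_restrict m D Jprev E Jk = mat m m (\<lambda>(i,j). if i \<in> Jprev - E \<and> j \<in> Jk then D $$ (i,j) else 0)"

fun bs_cols :: "nat \<Rightarrow> 'a::field mat \<Rightarrow> (nat \<Rightarrow> nat set) \<Rightarrow> nat \<Rightarrow> nat set" where
  "bs_cols m D J 0 = {}"
| "bs_cols m D J (Suc k) =
     snd ` rca_pivots m (block_restrict m D (J k) (bs_cols m D J k) (J (Suc k)))"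

definition bs_block :: "nat \<Rightarrow> 'a::field mat \<Rightarrow> (nat \<Rightarrow> nat set) \<Rightarrow> nat \<Rightarrow> 'a mat" where
  "bs_block m D J k = block_restrict m D (J (k-1)) (bs_cols m D J (k-1)) (J k)"

end

theory Submission
  imports Defs "Jordan_Normal_Form.Determinant"
begin

lemma mult_entry:
  assumes "A \<in> carrier_mat m m" "B \<in> carrier_mat m m" "i < m" "j < m"
  shows "(A * B) $$ (i,j) = (\<Sum>l<m. A $$ (i,l) * B $$ (l,j))"
  using assms by (auto simp: scalar_prod_def lessThan_atLeast0 intro!: sum.cong)

definition nc :: "'a::field mat \<Rightarrow> nat \<Rightarrow> nat \<Rightarrow> nat \<Rightarrow> 'a" where
  "nc A r p q = A $$ (p - r, q) / A $$ (p - r, p)"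

definition Nm :: "'a::field mat \<Rightarrow> nat set \<Rightarrow> nat \<Rightarrow> nat \<Rightarrow> nat \<Rightarrow> 'a" where
  "Nm A S r p q = (if p \<in> S \<and> p < q then nc A r p q else 0)"

definition UL :: "nat \<Rightarrow> 'a::field mat \<Rightarrow> nat set \<Rightarrow> nat \<Rightarrow> 'a mat" where
  "UL m A S r = mat m m (\<lambda>(p,q). (if p = q then 1 else 0) + Nm A S r p q)"

lemma UL_carrier[simp]: "UL m A S r \<in> carrier_mat m m"
  by (simp add: UL_def)

lemma T_elem_carrier[simp]: "T_elem m A r j \<in> carrier_mat m m"
  by (simp add: T_elem_def)

lemma foldr_carrier: "foldr (\<lambda>j X. T_elem m A r j * X) L (1\<^sub>m m) \<in> carrier_mat m m"
  by (induction L) (auto intro!: mult_carrier_mat[OF T_elem_carrier])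

lemma mult_T_elem_entry:
  assumes X: "X \<in> carrier_mat m m" and p: "p < m" and q: "q < m" and j: "j < m"
  shows "(X * T_elem m A r j) $$ (p,q) = X $$ (p,q) - (if j < q then X $$ (p,j) * nc A r j q else 0)"
proof -
  have "(X * T_elem m A r j) $$ (p,q) =
     (\<Sum>l<m. X $$ (p,l) * ((if l = q then 1 else 0) - (if l = j \<and> j < q then nc A r j q else 0)))"
    using X p q by (subst mult_entry) (auto simp: T_elem_def nc_def intro!: sum.cong)
  also have "\<dots> = (\<Sum>l<m. (if l = q then X $$ (p,l) else 0) - (if l = j then (if j < q then X $$ (p,l) * nc A r j q else 0) else 0))"
    by (rule sum.cong) (auto simp: algebra_simps)
  also have "\<dots> = (\<Sum>l<m. (if l = q then X $$ (p,l) else 0)) - (\<Sum>l<m. (if l = j then (if j < q then X $$ (p,l) * nc A r j q else 0) else 0))"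
    by (rule sum_subtractf)
  also have "\<dots> = X $$ (p,q) - (if j < q then X $$ (p,j) * nc A r j q else 0)"
    using q j by (simp add: sum.delta)
  finally show ?thesis .
qed

lemma UL_step:
  assumes "\<forall>x\<in>S. j < x" "j < m"
  shows "UL m A (insert j S) r * T_elem m A r j = UL m A S r"
proof (rule eq_matI)
  fix p q assume p: "p < dim_row (UL m A S r)" and q: "q < dim_col (UL m A S r)"
  hence pm: "p < m" and qm: "q < m" by (auto simp: UL_def)
  show "(UL m A (insert j S) r * T_elem m A r j) $$ (p, q) = UL m A S r $$ (p, q)"
    using assms pm qm
    apply (subst mult_T_elem_entry[OF UL_carrier pm qm \<open>j<m\<close>])
    apply (auto simp: UL_def Nm_def)
    done
qed (auto simp: UL_def T_elem_def)

lemma UL_foldr: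
  assumes "sorted L" "distinct L" "set L \<subseteq> {..<m}"
  shows "UL m A (set L) r * foldr (\<lambda>j X. T_elem m A r j * X) L (1\<^sub>m m) = 1\<^sub>m m"
  using assms
proof (induction L)
  case Nil
  show ?case by (rule eq_matI) (auto simp: UL_def Nm_def)
next
  case (Cons j L)
  have jL: "\<forall>x\<in>set L. j < x"
  proof
    fix x assume "x \<in> set L"
    with Cons.prems have "j \<le> x" "x \<noteq> j" by auto
    thus "j < x" by simp
  qed
  have jm: "j < m" using Cons.prems by auto
  have "UL m A (set (j # L)) r * foldr (\<lambda>j X. T_elem m A r j * X) (j # L) (1\<^sub>m m)
      = (UL m A (insert j (set L)) r * T_elem m A r j) * foldr (\<lambda>j X. T_elem m A r j * X) L (1\<^sub>m m)"
    by (simp add: foldr_carrier assoc_mult_mat[of _ m m _ m _ m])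
  also have "\<dots> = UL m A (set L) r * foldr (\<lambda>j X. T_elem m A r j * X) L (1\<^sub>m m)"
    by (metis UL_step[OF jL jm])
  also have "\<dots> = 1\<^sub>m m" using Cons by simp
  finally show ?case .
qed

lemma T_mat_foldr:
  "T_mat m A Np r = foldr (\<lambda>j X. T_elem m A r j * X) (sorted_list_of_set (snd ` Np)) (1\<^sub>m m)"
  by (simp add: T_mat_def)

lemma T_mat_carrier[simp]: "T_mat m A Np r \<in> carrier_mat m m"
  by (simp add: T_mat_foldr foldr_carrier)

lemma UL_T_mat:
  assumes "finite Np" "snd ` Np \<subseteq> {..<m}"
  shows "UL m A (snd ` Np) r * T_mat m A Np r = 1\<^sub>m m"
  using UL_foldr[of "sorted_list_of_set (snd ` Np)" m A r] assms
  by (simp add: T_mat_foldr)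

lemma mat_inv_eq:
  assumes T: "T \<in> carrier_mat m m" and U: "U \<in> carrier_mat m m" and UT: "U * T = 1\<^sub>m m"
  shows "mat_inv m T = U"
proof -
  have TU: "T * U = 1\<^sub>m m" by (rule mat_mult_left_right_inverse[OF U T UT])
  let ?P = "\<lambda>B. B \<in> carrier_mat m m \<and> T * B = 1\<^sub>m m \<and> B * T = 1\<^sub>m m"
  have "?P U" using U TU UT by auto
  hence PB: "?P (mat_inv m T)" unfolding mat_inv_def by (rule someI)
  let ?B = "mat_inv m T"
  have "?B = ?B * (T * U)" using PB TU by (metis right_mult_one_mat)
  also have "\<dots> = (?B * T) * U" using PB T U by (metis assoc_mult_mat)
  also have "\<dots> = U" using PB U by simp
  finally show ?thesis .
qed


definition Bm :: "nat \<Rightarrow> 'a::field mat \<Rightarrow> (nat\<times>nat) set \<Rightarrow> nat \<Rightarrow> 'a mat" where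
  "Bm m A Np r = A * T_mat m A Np r"

lemma np_mem: "(i,j) \<in> new_pivots m A P r \<longleftrightarrow>
   r \<le> j \<and> j < m \<and> i = j - r \<and> A $$ (j - r, j) \<noteq> 0 \<and> (\<forall>i'. (i',j) \<notin> P)"
  by (auto simp: new_pivots_def)

lemma np_snd: "x \<in> snd ` new_pivots m A P r \<longleftrightarrow>
   r \<le> x \<and> x < m \<and> A $$ (x - r, x) \<noteq> 0 \<and> (\<forall>i'. (i',x) \<notin> P)"
  by (force simp: new_pivots_def)

lemma np_finite: "finite (new_pivots m A P r)"
proof -
  have "new_pivots m A P r \<subseteq> (\<lambda>j. (j - r, j)) ` {..<m}" by (auto simp: new_pivots_def)
  thus ?thesis by (rule finite_subset) auto
qed

lemma np_sub: "snd ` new_pivots m A P r \<subseteq> {..<m}"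
  by (auto simp: new_pivots_def)

lemma Nm_nz: "Nm A S r x q \<noteq> 0 \<Longrightarrow> x \<in> S \<and> x < q \<and> A $$ (x - r, q) \<noteq> 0 \<and> A $$ (x - r, x) \<noteq> 0"
  by (auto simp: Nm_def nc_def split: if_splits)

context
  fixes m :: nat and A :: "'a::field mat" and Np :: "(nat\<times>nat) set" and r :: nat
  assumes A: "A \<in> carrier_mat m m" and fin: "finite Np" and sub: "snd ` Np \<subseteq> {..<m}"
begin

lemma TU: "T_mat m A Np r * UL m A (snd ` Np) r = 1\<^sub>m m"
  by (rule mat_mult_left_right_inverse[OF UL_carrier T_mat_carrier UL_T_mat[OF fin sub]])

lemma Bm_carrier: "Bm m A Np r \<in> carrier_mat m m"
  using A by (simp add: Bm_def)

lemma upd_eq: "rca_update m A Np r = UL m A (snd ` Np) r * Bm m A Np r"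
  unfolding rca_update_def Bm_def mat_inv_eq[OF T_mat_carrier UL_carrier UL_T_mat[OF fin sub]]
  using A by (metis assoc_mult_mat UL_carrier T_mat_carrier)

lemma upd_carrier: "rca_update m A Np r \<in> carrier_mat m m"
  unfolding upd_eq by (rule mult_carrier_mat[OF UL_carrier Bm_carrier])

lemma BU: "Bm m A Np r * UL m A (snd ` Np) r = A"
proof -
  have "Bm m A Np r * UL m A (snd ` Np) r = A * (T_mat m A Np r * UL m A (snd ` Np) r)"
    unfolding Bm_def using A by (metis assoc_mult_mat UL_carrier T_mat_carrier)
  also have "\<dots> = A" unfolding TU using A by simp
  finally show ?thesis .
qed

lemma upd_entry:
  assumes "i < m" "j < m"
  shows "rca_update m A Np r $$ (i,j) = Bm m A Np r $$ (i,j) +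
           (\<Sum>p<m. Nm A (snd ` Np) r i p * Bm m A Np r $$ (p,j))"
proof -
  have "rca_update m A Np r $$ (i,j) =
     (\<Sum>p<m. ((if i = p then 1 else 0) + Nm A (snd ` Np) r i p) * Bm m A Np r $$ (p,j))"
    unfolding upd_eq using assms Bm_carrier
    by (subst mult_entry[of _ m]) (auto simp: UL_def intro!: sum.cong)
  also have "\<dots> = (\<Sum>p<m. (if i = p then Bm m A Np r $$ (p,j) else 0) +
           Nm A (snd ` Np) r i p * Bm m A Np r $$ (p,j))"
    by (rule sum.cong) (auto simp: algebra_simps)
  also have "\<dots> = (\<Sum>p<m. (if i = p then Bm m A Np r $$ (p,j) else 0)) +
           (\<Sum>p<m. Nm A (snd ` Np) r i p * Bm m A Np r $$ (p,j))"
    by (rule sum.distrib)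
  also have "\<dots> = Bm m A Np r $$ (i,j) + (\<Sum>p<m. Nm A (snd ` Np) r i p * Bm m A Np r $$ (p,j))"
    using assms by (simp add: sum.delta)
  finally show ?thesis .
qed

lemma A_entry:
  assumes "i < m" "q < m"
  shows "A $$ (i,q) = Bm m A Np r $$ (i,q) + (\<Sum>x<m. Bm m A Np r $$ (i,x) * Nm A (snd ` Np) r x q)"
proof -
  have "A $$ (i,q) = (Bm m A Np r * UL m A (snd ` Np) r) $$ (i,q)" using BU by simp
  also have "\<dots> = (\<Sum>x<m. Bm m A Np r $$ (i,x) * ((if x = q then 1 else 0) + Nm A (snd ` Np) r x q))"
    using assms Bm_carrier
    by (subst mult_entry[of _ m]) (auto simp: UL_def intro!: sum.cong)
  also have "\<dots> = (\<Sum>x<m. (if x = q then Bm m A Np r $$ (i,x) else 0) +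
           Bm m A Np r $$ (i,x) * Nm A (snd ` Np) r x q)"
    by (rule sum.cong) (auto simp: algebra_simps)
  also have "\<dots> = (\<Sum>x<m. (if x = q then Bm m A Np r $$ (i,x) else 0)) +
           (\<Sum>x<m. Bm m A Np r $$ (i,x) * Nm A (snd ` Np) r x q)"
    by (rule sum.distrib)
  also have "\<dots> = Bm m A Np r $$ (i,q) + (\<Sum>x<m. Bm m A Np r $$ (i,x) * Nm A (snd ` Np) r x q)"
    using assms by (simp add: sum.delta')
  finally show ?thesis .
qed

lemma AB_zero:
  assumes "A * A = 0\<^sub>m m m"
  shows "A * Bm m A Np r = 0\<^sub>m m m"
proof -
  have "A * Bm m A Np r = (A * A) * T_mat m A Np r"
    unfolding Bm_def using A by (metis assoc_mult_mat T_mat_carrier)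
  thus ?thesis using assms by (simp add: left_mult_zero_mat[OF T_mat_carrier])
qed

lemma upd_sq:
  assumes "A * A = 0\<^sub>m m m"
  shows "rca_update m A Np r * rca_update m A Np r = 0\<^sub>m m m"
proof -
  let ?U = "UL m A (snd ` Np) r" and ?B = "Bm m A Np r"
  have U: "?U \<in> carrier_mat m m" by simp
  note B = Bm_carrier
  have e1: "(?U * ?B) * (?U * ?B) = ?U * (?B * (?U * ?B))"
    by (rule assoc_mult_mat[OF U B mult_carrier_mat[OF U B]])
  have e2: "?B * (?U * ?B) = (?B * ?U) * ?B" by (rule assoc_mult_mat[OF B U B, symmetric])
  have "rca_update m A Np r * rca_update m A Np r = ?U * ((?B * ?U) * ?B)"
    unfolding upd_eq e1 e2 ..
  also have "\<dots> = ?U * (A * ?B)" unfolding BU ..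
  also have "\<dots> = 0\<^sub>m m m" unfolding AB_zero[OF assms] by (rule right_mult_zero_mat[OF U])
  finally show ?thesis .
qed

lemma B_row_zero:
  assumes "p < m" "\<forall>q<m. A $$ (p,q) = 0" "j < m"
  shows "Bm m A Np r $$ (p,j) = 0"
  unfolding Bm_def using assms A by (subst mult_entry[of _ m]) auto

end


definition Inv :: "nat \<Rightarrow> nat \<Rightarrow> 'a::field mat \<Rightarrow> (nat\<times>nat) set \<Rightarrow> bool" where
"Inv m r A P \<longleftrightarrow> A \<in> carrier_mat m m \<and> A * A = 0\<^sub>m m m \<and>
 (\<forall>i<m. \<forall>j<m. A $$ (i,j) \<noteq> 0 \<longrightarrow> i < j) \<and>
 (\<forall>i j. i < j \<and> j < m \<and> j - i \<le> r \<and> (\<forall>i'. (i',j) \<notin> P) \<longrightarrow> A $$ (i,j) = 0) \<and>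
 (\<forall>i j. (i,j) \<in> P \<longrightarrow> i < j \<and> j < m \<and> j - i \<le> r \<and> A $$ (i,j) \<noteq> 0 \<and>
        (\<forall>l. i < l \<and> l < m \<longrightarrow> A $$ (l,j) = 0)) \<and>
 (\<forall>i x. (i,x) \<in> P \<longrightarrow> (\<forall>q<m. A $$ (x,q) = 0))"

lemma Inv_step:
  assumes inv: "Inv m r A P"
  defines "Np \<equiv> new_pivots m A P (Suc r)"
  shows "Inv m (Suc r) (rca_update m A Np (Suc r)) (P \<union> Np)"
proof -
  from inv have A: "A \<in> carrier_mat m m" and sq: "A * A = 0\<^sub>m m m"
    and U: "\<And>i j. i<m \<Longrightarrow> j<m \<Longrightarrow> A $$ (i,j) \<noteq> 0 \<Longrightarrow> i < j"
    and I3: "\<And>i j. i < j \<Longrightarrow> j < m \<Longrightarrow> j - i \<le> r \<Longrightarrow> (\<forall>i'. (i',j) \<notin> P) \<Longrightarrow> A $$ (i,j) = 0"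
    and PL: "\<And>i j. (i,j) \<in> P \<Longrightarrow> i < j \<and> j < m \<and> j - i \<le> r \<and> A $$ (i,j) \<noteq> 0 \<and>
        (\<forall>l. i < l \<and> l < m \<longrightarrow> A $$ (l,j) = 0)"
    and Z: "\<And>i x q. (i,x) \<in> P \<Longrightarrow> q < m \<Longrightarrow> A $$ (x,q) = 0"
    unfolding Inv_def by blast+
  have Uz: "\<And>i j. i<m \<Longrightarrow> j<m \<Longrightarrow> j \<le> i \<Longrightarrow> A $$ (i,j) = 0"
    using U by (meson leD)
  let ?C = "snd ` Np"
  let ?B = "Bm m A Np (Suc r)"
  let ?N = "Nm A ?C (Suc r)"
  let ?A' = "rca_update m A Np (Suc r)"
  have fin: "finite Np" unfolding Np_def by (rule np_finite)
  have sub: "?C \<subseteq> {..<m}" unfolding Np_def by (rule np_sub)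
  note Bc = Bm_carrier[OF A fin sub]
  have Cmem: "\<And>x. x \<in> ?C \<longleftrightarrow> Suc r \<le> x \<and> x < m \<and> A $$ (x - Suc r, x) \<noteq> 0 \<and> (\<forall>i'. (i',x) \<notin> P)"
    unfolding Np_def by (rule np_snd)
  have Npmem: "\<And>i j. (i,j) \<in> Np \<longleftrightarrow> Suc r \<le> j \<and> j < m \<and> i = j - Suc r \<and> A $$ (j - Suc r, j) \<noteq> 0 \<and> (\<forall>i'. (i',j) \<notin> P)"
    unfolding Np_def by (rule np_mem)
  have Nnz: "\<And>x q. ?N x q \<noteq> 0 \<Longrightarrow> x \<in> ?C \<and> x < q \<and> A $$ (x - Suc r, q) \<noteq> 0 \<and> A $$ (x - Suc r, x) \<noteq> 0"
    by (rule Nm_nz)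
  have Aent: "\<And>i q. i<m \<Longrightarrow> q<m \<Longrightarrow> A $$ (i,q) = ?B $$ (i,q) + (\<Sum>x<m. ?B $$ (i,x) * ?N x q)"
    by (rule A_entry[OF A fin sub])
  have Uent: "\<And>i j. i<m \<Longrightarrow> j<m \<Longrightarrow> ?A' $$ (i,j) = ?B $$ (i,j) + (\<Sum>p<m. ?N i p * ?B $$ (p,j))"
    by (rule upd_entry[OF A fin sub])
  have Bcol: "\<And>x l. x \<in> ?C \<Longrightarrow> l < m \<Longrightarrow> x < l + Suc r \<Longrightarrow> ?B $$ (l,x) = 0"
  proof -
    fix x l assume "x \<in> ?C" "l < m" "x < l + Suc r" thus "?B $$ (l,x) = 0"
    proof (induction x rule: less_induct)
      case (less x)
      have xm: "x < m" using less.prems Cmem by auto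
      have Alx: "A $$ (l,x) = 0"
      proof (rule ccontr)
        assume nz: "A $$ (l,x) \<noteq> 0"
        hence "l < x" using U less.prems xm by auto
        moreover have "x - l \<le> r" using less.prems by auto
        moreover have "\<forall>i'. (i',x) \<notin> P" using less.prems Cmem by auto
        ultimately show False using I3 xm nz by blast
      qed
      have "(\<Sum>x'<m. ?B $$ (l,x') * ?N x' x) = 0"
      proof (rule sum.neutral, intro ballI)
        fix x' assume "x' \<in> {..<m}"
        show "?B $$ (l,x') * ?N x' x = 0"
        proof (cases "?N x' x = 0")
          case False
          hence "x' \<in> ?C" "x' < x" using Nnz by auto
          hence "?B $$ (l,x') = 0" using less.IH less.prems by auto
          thus ?thesis by simp
        qed simp
      qed
      thus ?case using Aent[OF less.prems(2) xm] Alx by simp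
    qed
  qed
  have Bkeep: "\<And>l j. l < m \<Longrightarrow> j < m \<Longrightarrow> (\<forall>x\<in>?C. x < j \<longrightarrow> x < l + Suc r) \<Longrightarrow> ?B $$ (l,j) = A $$ (l,j)"
  proof -
    fix l j assume lm: "l < m" and jm: "j < m" and H: "\<forall>x\<in>?C. x < j \<longrightarrow> x < l + Suc r"
    have "(\<Sum>x<m. ?B $$ (l,x) * ?N x j) = 0"
    proof (rule sum.neutral, intro ballI)
      fix x assume "x \<in> {..<m}"
      show "?B $$ (l,x) * ?N x j = 0"
      proof (cases "?N x j = 0")
        case False
        hence "x \<in> ?C" "x < j" using Nnz by auto
        hence "?B $$ (l,x) = 0" using Bcol H lm by auto
        thus ?thesis by simp
      qed simp
    qed
    thus "?B $$ (l,j) = A $$ (l,j)" using Aent[OF lm jm] by simp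
  qed
  have Ukeep: "\<And>l j. l < m \<Longrightarrow> j < m \<Longrightarrow> (\<forall>p. l < p \<and> p < m \<longrightarrow> ?B $$ (p,j) = 0) \<Longrightarrow> ?A' $$ (l,j) = ?B $$ (l,j)"
  proof -
    fix l j assume lm: "l < m" and jm: "j < m" and H: "\<forall>p. l < p \<and> p < m \<longrightarrow> ?B $$ (p,j) = 0"
    have "(\<Sum>p<m. ?N l p * ?B $$ (p,j)) = 0"
    proof (rule sum.neutral, intro ballI)
      fix p assume "p \<in> {..<m}"
      show "?N l p * ?B $$ (p,j) = 0"
      proof (cases "?N l p = 0")
        case False
        hence "l < p" using Nnz by auto
        thus ?thesis using H \<open>p \<in> {..<m}\<close> by auto
      qed simp
    qed
    thus "?A' $$ (l,j) = ?B $$ (l,j)" using Uent[OF lm jm] by simp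
  qed
  have Bup: "\<And>q l. q < m \<Longrightarrow> l < m \<Longrightarrow> q \<le> l \<Longrightarrow> ?B $$ (l,q) = 0"
  proof -
    fix q l assume "q < m" "l < m" "q \<le> l" thus "?B $$ (l,q) = 0"
    proof (induction q rule: less_induct)
      case (less q)
      have Alq: "A $$ (l,q) = 0"
      proof (rule ccontr)
        assume "A $$ (l,q) \<noteq> 0"
        hence "l < q" using U less.prems by auto
        thus False using less.prems by simp
      qed
      have "(\<Sum>x<m. ?B $$ (l,x) * ?N x q) = 0"
      proof (rule sum.neutral, intro ballI)
        fix x assume xm: "x \<in> {..<m}"
        show "?B $$ (l,x) * ?N x q = 0"
        proof (cases "?N x q = 0")
          case False
          hence "x < q" using Nnz by auto
          hence "?B $$ (l,x) = 0" using less.IH less.prems xm by auto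
          thus ?thesis by simp
        qed simp
      qed
      thus ?case using Aent[OF less.prems(2) less.prems(1)] Alq by simp
    qed
  qed
  have U': "\<forall>i<m. \<forall>j<m. ?A' $$ (i,j) \<noteq> 0 \<longrightarrow> i < j"
  proof (intro allI impI)
    fix i j assume im: "i < m" and jm: "j < m" and nz: "?A' $$ (i,j) \<noteq> 0"
    show "i < j"
    proof (rule ccontr)
      assume "\<not> i < j"
      hence ji: "j \<le> i" by simp
      have "?A' $$ (i,j) = ?B $$ (i,j)" using Ukeep[OF im jm] Bup jm ji by auto
      also have "\<dots> = 0" using Bup jm im ji by auto
      finally show False using nz by simp
    qed
  qed
  have I3': "\<forall>i j. i < j \<and> j < m \<and> j - i \<le> Suc r \<and> (\<forall>i'. (i',j) \<notin> P \<union> Np) \<longrightarrow> ?A' $$ (i,j) = 0"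
  proof (intro allI impI, elim conjE)
    fix i j assume ij: "i < j" and jm: "j < m" and d: "j - i \<le> Suc r" and um: "\<forall>i'. (i',j) \<notin> P \<union> Np"
    have Az: "\<And>l. i \<le> l \<Longrightarrow> l < m \<Longrightarrow> A $$ (l,j) = 0"
    proof -
      fix l assume il: "i \<le> l" and lm: "l < m"
      show "A $$ (l,j) = 0"
      proof (cases "j \<le> l")
        case True thus ?thesis using Uz lm jm by blast
      next
        case False
        show ?thesis
        proof (cases "j - l \<le> r")
          case True thus ?thesis using I3[of l j] False jm um by auto
        next
          case False2: False
          hence "l = j - Suc r" "Suc r \<le> j" using d il by auto
          thus ?thesis using Npmem[of l j] um jm by auto
        qed
      qed
    qed
    have Bz: "\<And>l. i \<le> l \<Longrightarrow> l < m \<Longrightarrow> ?B $$ (l,j) = 0"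
    proof -
      fix l assume il: "i \<le> l" and lm: "l < m"
      have "\<forall>x\<in>?C. x < j \<longrightarrow> x < l + Suc r" using d il by auto
      thus "?B $$ (l,j) = 0" using Bkeep[OF lm jm] Az[OF il lm] by simp
    qed
    have im: "i < m" using ij jm by simp
    have "?A' $$ (i,j) = ?B $$ (i,j)" using Ukeep[OF im jm] Bz by auto
    thus "?A' $$ (i,j) = 0" using Bz[of i] im by simp
  qed
  have keep: "\<And>i j. i < j \<Longrightarrow> j < m \<Longrightarrow> A $$ (i,j) \<noteq> 0 \<Longrightarrow> (\<forall>l. i < l \<and> l < m \<longrightarrow> A $$ (l,j) = 0)
      \<Longrightarrow> j \<le> i + Suc r \<Longrightarrow> ?A' $$ (i,j) \<noteq> 0 \<and> (\<forall>l. i < l \<and> l < m \<longrightarrow> ?A' $$ (l,j) = 0)"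
  proof -
    fix i j assume ij: "i < j" and jm: "j < m" and nz: "A $$ (i,j) \<noteq> 0"
      and bel: "\<forall>l. i < l \<and> l < m \<longrightarrow> A $$ (l,j) = 0" and d: "j \<le> i + Suc r"
    have Bk: "\<And>l. i \<le> l \<Longrightarrow> l < m \<Longrightarrow> ?B $$ (l,j) = A $$ (l,j)"
    proof -
      fix l assume il: "i \<le> l" and lm: "l < m"
      have "\<forall>x\<in>?C. x < j \<longrightarrow> x < l + Suc r" using d il by auto
      thus "?B $$ (l,j) = A $$ (l,j)" using Bkeep[OF lm jm] by simp
    qed
    have Ak: "\<And>l. i \<le> l \<Longrightarrow> l < m \<Longrightarrow> ?A' $$ (l,j) = A $$ (l,j)"
    proof -
      fix l assume il: "i \<le> l" and lm: "l < m"
      have "\<forall>p. l < p \<and> p < m \<longrightarrow> ?B $$ (p,j) = 0" using Bk bel il by auto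
      thus "?A' $$ (l,j) = A $$ (l,j)" using Ukeep[OF lm jm] Bk[OF il lm] by simp
    qed
    show "?A' $$ (i,j) \<noteq> 0 \<and> (\<forall>l. i < l \<and> l < m \<longrightarrow> ?A' $$ (l,j) = 0)"
      using Ak bel nz ij jm by auto
  qed
  have PL': "\<forall>i j. (i,j) \<in> P \<union> Np \<longrightarrow> i < j \<and> j < m \<and> j - i \<le> Suc r \<and> ?A' $$ (i,j) \<noteq> 0 \<and>
        (\<forall>l. i < l \<and> l < m \<longrightarrow> ?A' $$ (l,j) = 0)"
  proof (intro allI impI)
    fix i j assume "(i,j) \<in> P \<union> Np"
    thus "i < j \<and> j < m \<and> j - i \<le> Suc r \<and> ?A' $$ (i,j) \<noteq> 0 \<and>
        (\<forall>l. i < l \<and> l < m \<longrightarrow> ?A' $$ (l,j) = 0)"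
    proof
      assume "(i,j) \<in> P"
      note h = PL[OF this]
      have d: "j \<le> i + Suc r" using h by arith
      have "?A' $$ (i,j) \<noteq> 0 \<and> (\<forall>l. i < l \<and> l < m \<longrightarrow> ?A' $$ (l,j) = 0)"
        using h by (intro keep d) auto
      thus ?thesis using h by auto
    next
      assume "(i,j) \<in> Np"
      hence j: "Suc r \<le> j" "j < m" "i = j - Suc r" "A $$ (j - Suc r, j) \<noteq> 0" "\<forall>i'. (i',j) \<notin> P"
        using Npmem by auto
      have bel: "\<forall>l. i < l \<and> l < m \<longrightarrow> A $$ (l,j) = 0"
      proof (intro allI impI, elim conjE)
        fix l assume il: "i < l" and lm: "l < m"
        show "A $$ (l,j) = 0"
        proof (cases "j \<le> l")
          case True thus ?thesis using Uz lm j by blast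
        next
          case False thus ?thesis using I3[of l j] j il by auto
        qed
      qed
      have d: "j \<le> i + Suc r" using j by arith
      have "?A' $$ (i,j) \<noteq> 0 \<and> (\<forall>l. i < l \<and> l < m \<longrightarrow> ?A' $$ (l,j) = 0)"
        using j bel by (intro keep d) auto
      thus ?thesis using j by auto
    qed
  qed
  have Z': "\<forall>i x. (i,x) \<in> P \<union> Np \<longrightarrow> (\<forall>q<m. ?A' $$ (x,q) = 0)"
  proof (intro allI impI)
    fix i x q assume ix: "(i,x) \<in> P \<union> Np" and qm: "q < m"
    show "?A' $$ (x,q) = 0"
    proof (cases "(i,x) \<in> P")
      case True
      have xm: "x < m" using PL[OF True] by auto
      have xC: "x \<notin> ?C" using Cmem True by auto
      have "(\<Sum>p<m. ?N x p * ?B $$ (p,q)) = 0" using xC by (simp add: Nm_def)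
      moreover have "?B $$ (x,q) = 0" using B_row_zero[OF A fin sub xm _ qm] Z[OF True] by auto
      ultimately show ?thesis using Uent[OF xm qm] by simp
    next
      case False
      hence inp: "(i,x) \<in> Np" using ix by auto
      hence j: "Suc r \<le> x" "x < m" "i = x - Suc r" "A $$ (i, x) \<noteq> 0" "\<forall>i'. (i',x) \<notin> P"
        using Npmem by auto
      have xC: "x \<in> ?C" using inp by force
      have im: "i < m" using j by auto
      define a where "a = A $$ (i,x)"
      have a0: "a \<noteq> 0" using j a_def by simp
      have "(A * ?B) $$ (i,q) = 0" using AB_zero[OF A fin sub sq] im qm by simp
      hence tot: "(\<Sum>p<m. A $$ (i,p) * ?B $$ (p,q)) = 0" using mult_entry[OF A Bc im qm] by simp
      have split: "(\<Sum>p<m. A $$ (i,p) * ?B $$ (p,q)) =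
          (\<Sum>p<m. (if p < x then A $$ (i,p) * ?B $$ (p,q) else 0)) +
          ((\<Sum>p<m. (if p = x then A $$ (i,p) * ?B $$ (p,q) else 0)) +
          (\<Sum>p<m. (if x < p then A $$ (i,p) * ?B $$ (p,q) else 0)))"
      proof -
        have "(\<Sum>p<m. A $$ (i,p) * ?B $$ (p,q)) =
          (\<Sum>p<m. (if p < x then A $$ (i,p) * ?B $$ (p,q) else 0) +
          ((if p = x then A $$ (i,p) * ?B $$ (p,q) else 0) +
          (if x < p then A $$ (i,p) * ?B $$ (p,q) else 0)))"
          by (rule sum.cong) auto
        thus ?thesis by (simp add: sum.distrib)
      qed
      have left: "(\<Sum>p<m. (if p < x then A $$ (i,p) * ?B $$ (p,q) else 0)) = 0"
      proof (rule sum.neutral, intro ballI)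
        fix p assume pm: "p \<in> {..<m}"
        show "(if p < x then A $$ (i,p) * ?B $$ (p,q) else 0) = 0"
        proof (cases "p < x \<and> A $$ (i,p) \<noteq> 0")
          case True
          hence ip: "i < p" using U im pm by auto
          have "p - i \<le> r" using True j by auto
          hence "\<exists>i'. (i',p) \<in> P" using I3[of i p] ip pm True by auto
          then obtain i' where "(i',p) \<in> P" by blast
          hence "?B $$ (p,q) = 0" using B_row_zero[OF A fin sub _ _ qm] Z pm by auto
          thus ?thesis by simp
        qed auto
      qed
      have mid: "(\<Sum>p<m. (if p = x then A $$ (i,p) * ?B $$ (p,q) else 0)) = a * ?B $$ (x,q)"
        using j by (simp add: sum.delta' a_def)
      have rel: "a * ?B $$ (x,q) + (\<Sum>p<m. (if x < p then A $$ (i,p) * ?B $$ (p,q) else 0)) = 0"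
        using tot split left mid by simp
      have Nx: "\<And>p. ?N x p = (if x < p then A $$ (i,p) / a else 0)"
        using xC j by (simp add: Nm_def nc_def a_def)
      have "a * ?A' $$ (x,q) = a * ?B $$ (x,q) + (\<Sum>p<m. a * (?N x p * ?B $$ (p,q)))"
        using Uent[OF j(2) qm] by (simp add: distrib_left sum_distrib_left)
      also have "(\<Sum>p<m. a * (?N x p * ?B $$ (p,q))) = (\<Sum>p<m. (if x < p then A $$ (i,p) * ?B $$ (p,q) else 0))"
        using a0 by (intro sum.cong) (auto simp: Nx)
      finally have "a * ?A' $$ (x,q) = 0" using rel by simp
      thus ?thesis using a0 by simp
    qed
  qed
  have carr: "?A' \<in> carrier_mat m m" by (rule upd_carrier[OF A fin sub])
  have sq': "?A' * ?A' = 0\<^sub>m m m" by (rule upd_sq[OF A fin sub sq])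
  show ?thesis unfolding Inv_def using carr sq' U' I3' PL' Z' by blast
qed


definition FinalInv :: "nat \<Rightarrow> 'a::field mat \<Rightarrow> (nat\<times>nat) set \<Rightarrow> bool" where
"FinalInv m A P \<longleftrightarrow>
 (\<forall>i j. (i,j) \<in> P \<longrightarrow> i < j \<and> j < m \<and> A $$ (i,j) \<noteq> 0 \<and> (\<forall>l. i < l \<and> l < m \<longrightarrow> A $$ (l,j) = 0)) \<and>
 (\<forall>i x. (i,x) \<in> P \<longrightarrow> (\<forall>q<m. A $$ (x,q) = 0))"

lemma Inv_final:
  assumes inv: "Inv m r A P" and rm: "Suc r = m - 1"
  shows "FinalInv m A (P \<union> new_pivots m A P (Suc r))"
proof -
  from inv have
        U: "\<And>i j. i<m \<Longrightarrow> j<m \<Longrightarrow> A $$ (i,j) \<noteq> 0 \<Longrightarrow> i < j"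
    and I3: "\<And>i j. i < j \<Longrightarrow> j < m \<Longrightarrow> j - i \<le> r \<Longrightarrow> (\<forall>i'. (i',j) \<notin> P) \<Longrightarrow> A $$ (i,j) = 0"
    and PL: "\<And>i j. (i,j) \<in> P \<Longrightarrow> i < j \<and> j < m \<and> j - i \<le> r \<and> A $$ (i,j) \<noteq> 0 \<and>
        (\<forall>l. i < l \<and> l < m \<longrightarrow> A $$ (l,j) = 0)"
    and Z: "\<And>i x q. (i,x) \<in> P \<Longrightarrow> q < m \<Longrightarrow> A $$ (x,q) = 0"
    unfolding Inv_def by blast+
  have Uz: "\<And>i j. i<m \<Longrightarrow> j<m \<Longrightarrow> j \<le> i \<Longrightarrow> A $$ (i,j) = 0"
    using U by (meson leD)
  have new: "\<And>i j. (i,j) \<in> new_pivots m A P (Suc r) \<Longrightarrow> i = 0 \<and> j = m - 1 \<and> A $$ (i,j) \<noteq> 0 \<and> (\<forall>i'. (i',j) \<notin> P)"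
    using rm by (auto simp: np_mem)
  show ?thesis unfolding FinalInv_def
  proof (rule conjI; intro allI impI)
    fix i j assume "(i,j) \<in> P \<union> new_pivots m A P (Suc r)"
    thus "i < j \<and> j < m \<and> A $$ (i,j) \<noteq> 0 \<and> (\<forall>l. i < l \<and> l < m \<longrightarrow> A $$ (l,j) = 0)"
    proof
      assume "(i,j) \<in> P" thus ?thesis using PL by blast
    next
      assume a: "(i,j) \<in> new_pivots m A P (Suc r)"
      note h = new[OF a]
      have jm: "j < m" "0 < j" using h rm by auto
      have "\<forall>l. i < l \<and> l < m \<longrightarrow> A $$ (l,j) = 0"
      proof (intro allI impI, elim conjE)
        fix l assume il: "i < l" and lm: "l < m"
        show "A $$ (l,j) = 0"
        proof (cases "j \<le> l")
          case True thus ?thesis using Uz lm jm by blast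
        next
          case False thus ?thesis using I3[of l j] h il jm rm by auto
        qed
      qed
      thus ?thesis using h jm by auto
    qed
  next
    fix i x q assume ix: "(i,x) \<in> P \<union> new_pivots m A P (Suc r)" and qm: "q < m"
    show "A $$ (x,q) = 0"
    proof (cases "(i,x) \<in> P")
      case True thus ?thesis using Z qm by blast
    next
      case False
      hence "x = m - 1" using new ix by blast
      thus ?thesis using Uz[of x q] qm by (cases m) auto
    qed
  qed
qed

lemma rca_Suc_fst: "fst (rca m X (Suc r)) =
   (if Suc r \<le> m - 2 then rca_update m (fst (rca m X r)) (new_pivots m (fst (rca m X r)) (snd (rca m X r)) (Suc r)) (Suc r)
    else fst (rca m X r))"
  by (simp add: Let_def)

lemma rca_Suc_snd: "snd (rca m X (Suc r)) =
   snd (rca m X r) \<union> new_pivots m (fst (rca m X r)) (snd (rca m X r)) (Suc r)"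
  by (simp add: Let_def)

lemma rca_carrier: "X \<in> carrier_mat m m \<Longrightarrow> fst (rca m X r) \<in> carrier_mat m m"
proof (induction r)
  case 0 thus ?case by simp
next
  case (Suc r)
  thus ?case unfolding rca_Suc_fst using upd_carrier[OF _ np_finite np_sub] by auto
qed

lemma rca_mono: "r \<le> r' \<Longrightarrow> snd (rca m X r) \<subseteq> snd (rca m X r')"
proof (induction r' rule: dec_induct)
  case (step n) thus ?case unfolding rca_Suc_snd by auto
qed simp

lemma rca_Inv:
  assumes D: "D \<in> carrier_mat m m" and sq: "D * D = 0\<^sub>m m m"
    and U: "\<forall>i<m. \<forall>j<m. D $$ (i,j) \<noteq> 0 \<longrightarrow> i < j"
  shows "r \<le> m - 2 \<Longrightarrow> Inv m r (fst (rca m D r)) (snd (rca m D r))"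
proof (induction r)
  case 0
  show ?case unfolding Inv_def using D sq U by auto
next
  case (Suc r)
  hence "Inv m r (fst (rca m D r)) (snd (rca m D r))" by simp
  from Inv_step[OF this] show ?case
    unfolding rca_Suc_fst rca_Suc_snd using Suc.prems by simp
qed

lemma rca_FinalInv:
  assumes D: "D \<in> carrier_mat m m" and sq: "D * D = 0\<^sub>m m m"
    and U: "\<forall>i<m. \<forall>j<m. D $$ (i,j) \<noteq> 0 \<longrightarrow> i < j" and m1: "m \<ge> 1"
  shows "FinalInv m (rca_final m D) (rca_pivots m D)"
proof (cases "m = 1")
  case True
  thus ?thesis by (simp add: rca_final_def rca_pivots_def FinalInv_def)
next
  case False
  hence eq: "m - 1 = Suc (m - 2)" using m1 by arith
  have inv: "Inv m (m - 2) (fst (rca m D (m-2))) (snd (rca m D (m-2)))"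
    by (rule rca_Inv[OF D sq U]) simp
  have "FinalInv m (fst (rca m D (m-2))) (snd (rca m D (m-2)) \<union>
      new_pivots m (fst (rca m D (m-2))) (snd (rca m D (m-2))) (Suc (m-2)))"
    by (rule Inv_final[OF inv]) (use eq in simp)
  thus ?thesis unfolding rca_final_def rca_pivots_def eq rca_Suc_fst rca_Suc_snd by simp
qed

definition Bl :: "nat \<Rightarrow> (nat \<Rightarrow> nat) \<Rightarrow> 'a::field mat \<Rightarrow> bool" where
  "Bl m g A \<longleftrightarrow> (\<forall>i<m. \<forall>j<m. A $$ (i,j) \<noteq> 0 \<longrightarrow> g j = Suc (g i))"

lemma sum_nz: "(\<Sum>x\<in>S. f x) \<noteq> (0::'a::comm_monoid_add) \<Longrightarrow> \<exists>x\<in>S. f x \<noteq> 0"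
  by (meson sum.neutral)

lemma Bl_upd:
  assumes A: "A \<in> carrier_mat m m" and fin: "finite Np" and sub: "snd ` Np \<subseteq> {..<m}"
    and bl: "Bl m g A"
  shows "Bl m g (rca_update m A Np r)"
proof -
  let ?B = "Bm m A Np r" and ?N = "Nm A (snd ` Np) r"
  have Ng: "\<And>x q. x < m \<Longrightarrow> q < m \<Longrightarrow> ?N x q \<noteq> 0 \<Longrightarrow> g q = g x"
  proof -
    fix x q assume xm: "x < m" and qm: "q < m" and nz: "?N x q \<noteq> 0"
    from Nm_nz[OF nz] have "A $$ (x - r, q) \<noteq> 0" "A $$ (x - r, x) \<noteq> 0" by auto
    thus "g q = g x" using bl xm qm unfolding Bl_def
      by (metis less_imp_diff_less)
  qed
  have Bb: "\<And>q i. q < m \<Longrightarrow> i < m \<Longrightarrow> ?B $$ (i,q) \<noteq> 0 \<Longrightarrow> g q = Suc (g i)"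
  proof -
    fix q i assume "q < m" "i < m" "?B $$ (i,q) \<noteq> 0" thus "g q = Suc (g i)"
    proof (induction q rule: less_induct)
      case (less q)
      have eq: "A $$ (i,q) = ?B $$ (i,q) + (\<Sum>x<m. ?B $$ (i,x) * ?N x q)"
        by (rule A_entry[OF A fin sub less.prems(2) less.prems(1)])
      show ?case
      proof (cases "A $$ (i,q) = 0")
        case False thus ?thesis using bl less.prems unfolding Bl_def by blast
      next
        case True
        hence "(\<Sum>x<m. ?B $$ (i,x) * ?N x q) \<noteq> 0" using eq less.prems(3)
          by (metis add.right_neutral add_eq_0_iff)
        then obtain x where x: "x < m" "?B $$ (i,x) * ?N x q \<noteq> 0" using sum_nz by blast
        hence "?N x q \<noteq> 0" "?B $$ (i,x) \<noteq> 0" by auto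
        moreover have "x < q" using Nm_nz[OF \<open>?N x q \<noteq> 0\<close>] by auto
        ultimately show ?thesis using less.IH[of x] x Ng[of x q] less.prems by auto
      qed
    qed
  qed
  show ?thesis unfolding Bl_def
  proof (intro allI impI)
    fix i j assume im: "i < m" and jm: "j < m" and nz: "rca_update m A Np r $$ (i,j) \<noteq> 0"
    have eq: "rca_update m A Np r $$ (i,j) = ?B $$ (i,j) + (\<Sum>p<m. ?N i p * ?B $$ (p,j))"
      by (rule upd_entry[OF A fin sub im jm])
    show "g j = Suc (g i)"
    proof (cases "?B $$ (i,j) = 0")
      case False thus ?thesis using Bb im jm by blast
    next
      case True
      hence "(\<Sum>p<m. ?N i p * ?B $$ (p,j)) \<noteq> 0" using eq nz by simp
      then obtain p where p: "p < m" "?N i p * ?B $$ (p,j) \<noteq> 0" using sum_nz by blast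
      hence "?N i p \<noteq> 0" "?B $$ (p,j) \<noteq> 0" by auto
      thus ?thesis using Ng[OF im p(1)] Bb[OF jm p(1)] by simp
    qed
  qed
qed

lemma Bl_rca:
  assumes "X \<in> carrier_mat m m" "Bl m g X"
  shows "Bl m g (fst (rca m X r))"
proof (induction r)
  case 0 thus ?case using assms by simp
next
  case (Suc r)
  thus ?case unfolding rca_Suc_fst
    using Bl_upd[OF rca_carrier[OF assms(1)] np_finite np_sub] by auto
qed


locale cm_setup =
  fixes m b :: nat and J :: "nat \<Rightarrow> nat set" and D :: "'a::field mat"
  assumes m1: "m \<ge> 1" and cm: "connection_matrix m b J D"
begin

definition g :: "nat \<Rightarrow> nat" where "g i = (THE k. k \<le> b \<and> i \<in> J k)"

lemma Dc: "D \<in> carrier_mat m m" and part: "is_partition m b J" and sqD: "D * D = 0\<^sub>m m m"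
  and nzD: "\<And>i j. i < m \<Longrightarrow> j < m \<Longrightarrow> D $$ (i,j) \<noteq> 0 \<Longrightarrow> i < j \<and> (\<exists>k\<in>{1..b}. i \<in> J (k-1) \<and> j \<in> J k)"
  using cm unfolding connection_matrix_def by blast+

lemma Jsub: "k \<le> b \<Longrightarrow> J k \<subseteq> {..<m}"
  using part unfolding is_partition_def by auto

lemma Jdisj: "k \<le> b \<Longrightarrow> k' \<le> b \<Longrightarrow> k \<noteq> k' \<Longrightarrow> J k \<inter> J k' = {}"
  using part unfolding is_partition_def by auto

lemma g_eq: "k \<le> b \<Longrightarrow> i \<in> J k \<Longrightarrow> g i = k"
  unfolding g_def using Jdisj by (intro the_equality) auto

lemma g_prop: "i < m \<Longrightarrow> g i \<le> b \<and> i \<in> J (g i)"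
proof -
  assume "i < m"
  hence "\<exists>k\<in>{0..b}. i \<in> J k" using part unfolding is_partition_def by auto
  then obtain k where "k \<le> b" "i \<in> J k" by auto
  thus ?thesis using g_eq by simp
qed

lemma UD: "\<forall>i<m. \<forall>j<m. D $$ (i,j) \<noteq> 0 \<longrightarrow> i < j"
  using nzD by blast

lemma Bl_D: "Bl m g D"
  unfolding Bl_def
proof (intro allI impI)
  fix i j assume "i < m" "j < m" "D $$ (i,j) \<noteq> 0"
  then obtain k where "k \<in> {1..b}" "i \<in> J (k-1)" "j \<in> J k" using nzD by blast
  thus "g j = Suc (g i)" using g_eq[of k j] g_eq[of "k-1" i] by auto
qed

abbreviation "Af \<equiv> rca_final m D"
abbreviation "Pf \<equiv> rca_pivots m D"

lemma FI: "FinalInv m Af Pf"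
  by (rule rca_FinalInv[OF Dc sqD UD m1])

lemma D1: "(x,j) \<in> Pf \<Longrightarrow> (i,x) \<in> Pf \<Longrightarrow> False"
  using FI unfolding FinalInv_def by (metis less_trans)

lemma Pf_sub: "r \<le> m - 1 \<Longrightarrow> snd (rca m D r) \<subseteq> Pf"
  unfolding rca_pivots_def by (rule rca_mono)

lemma Bl_full: "Bl m g (fst (rca m D r))"
  by (rule Bl_rca[OF Dc Bl_D])

lemma Bl_Af: "Bl m g Af"
  unfolding rca_final_def by (rule Bl_full)

lemma Pf_blk: "(i,j) \<in> Pf \<Longrightarrow> i < m \<and> j < m \<and> g j = Suc (g i)"
  using FI Bl_Af unfolding FinalInv_def Bl_def by (metis less_trans)

definition gk :: "nat \<Rightarrow> nat set \<Rightarrow> nat \<Rightarrow> nat" where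
  "gk k Jt i = (if i \<in> J (k-1) - Jt then 0 else if i \<in> J k then 1 else 5)"

lemma gk_char:
  assumes "1 \<le> k" "k \<le> b" "gk k Jt j = Suc (gk k Jt i)"
  shows "i \<in> J (k-1) - Jt \<and> j \<in> J k"
proof -
  have d: "J (k-1) \<inter> J k = {}" using Jdisj assms by auto
  show ?thesis using assms(3) d unfolding gk_def by (auto split: if_splits)
qed

lemma Bl_Dk:
  assumes "1 \<le> k" "k \<le> b"
  shows "Bl m (gk k Jt) (block_restrict m D (J (k-1)) Jt (J k))"
proof -
  have d: "J (k-1) \<inter> J k = {}" using Jdisj assms by auto
  show ?thesis unfolding Bl_def block_restrict_def gk_def using d by auto
qed

lemma sim_c:
  assumes "1 \<le> k" "k \<le> b"
  shows "\<And>i j. i < m \<Longrightarrow> j < m \<Longrightarrow> fst (rca m (block_restrict m D (J (k-1)) Jt (J k)) r) $$ (i,j) \<noteq> 0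
     \<Longrightarrow> i \<in> J (k-1) - Jt \<and> j \<in> J k"
proof -
  have "Bl m (gk k Jt) (fst (rca m (block_restrict m D (J (k-1)) Jt (J k)) r))"
    by (rule Bl_rca[OF _ Bl_Dk[OF assms]]) (simp add: block_restrict_def)
  thus "\<And>i j. i < m \<Longrightarrow> j < m \<Longrightarrow> fst (rca m (block_restrict m D (J (k-1)) Jt (J k)) r) $$ (i,j) \<noteq> 0
     \<Longrightarrow> i \<in> J (k-1) - Jt \<and> j \<in> J k"
    unfolding Bl_def using gk_char[OF assms] by blast
qed

lemma sim:
  assumes k: "1 \<le> k" "k \<le> b" and Jt: "Jt = {x \<in> J (k-1). \<exists>i. (i,x) \<in> Pf}"
  defines "Dk \<equiv> block_restrict m D (J (k-1)) Jt (J k)"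
  shows "r \<le> m - 1 \<Longrightarrow> snd (rca m Dk r) = {p \<in> snd (rca m D r). snd p \<in> J k} \<and>
          (\<forall>i\<in>J (k-1) - Jt. \<forall>j\<in>J k. fst (rca m D r) $$ (i,j) = fst (rca m Dk r) $$ (i,j))"
proof (induction r)
  case 0
  show ?case
  proof
    show "snd (rca m Dk 0) = {p \<in> snd (rca m D 0). snd p \<in> J k}" by simp
    show "\<forall>i\<in>J (k-1) - Jt. \<forall>j\<in>J k. fst (rca m D 0) $$ (i,j) = fst (rca m Dk 0) $$ (i,j)"
    proof (intro ballI)
      fix i j assume iJ: "i \<in> J (k-1) - Jt" and jk: "j \<in> J k"
      have j1: "J (k-1) \<subseteq> {..<m}" "J k \<subseteq> {..<m}" using Jsub[of "k-1"] Jsub[of k] k by auto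
      have "i < m" "j < m" using j1 iJ jk by auto
      thus "fst (rca m D 0) $$ (i,j) = fst (rca m Dk 0) $$ (i,j)"
        using iJ jk unfolding Dk_def block_restrict_def by simp
    qed
  qed
next
  case (Suc r)
  have Dkc: "Dk \<in> carrier_mat m m" unfolding Dk_def block_restrict_def by simp
  have disj: "J (k-1) \<inter> J k = {}" using Jdisj k by auto
  have Jk: "J k \<subseteq> {..<m}" "J (k-1) \<subseteq> {..<m}" using Jsub[of "k-1"] Jsub[of k] k by auto
  let ?A = "fst (rca m D r)" and ?P = "snd (rca m D r)"
  let ?A' = "fst (rca m Dk r)" and ?P' = "snd (rca m Dk r)"
  let ?N = "new_pivots m ?A ?P (Suc r)" and ?N' = "new_pivots m ?A' ?P' (Suc r)"
  from Suc have IHa: "?P' = {p \<in> ?P. snd p \<in> J k}"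
    and IHb: "\<And>i j. i \<in> J (k-1) - Jt \<Longrightarrow> j \<in> J k \<Longrightarrow> ?A $$ (i,j) = ?A' $$ (i,j)" by auto
  have Ac: "?A \<in> carrier_mat m m" by (rule rca_carrier[OF Dc])
  have A'c: "?A' \<in> carrier_mat m m" by (rule rca_carrier[OF Dkc])
  have blA: "Bl m g ?A" by (rule Bl_full)
  have cA': "\<And>i j. i < m \<Longrightarrow> j < m \<Longrightarrow> ?A' $$ (i,j) \<noteq> 0 \<Longrightarrow> i \<in> J (k-1) - Jt \<and> j \<in> J k"
    unfolding Dk_def by (rule sim_c[OF k])
  have NPf: "?N \<subseteq> Pf" using Pf_sub[of "Suc r"] Suc.prems unfolding rca_Suc_snd by auto
  have Nrow: "\<And>i j. (i,j) \<in> ?N \<Longrightarrow> j \<in> J k \<Longrightarrow> i \<in> J (k-1) - Jt"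
  proof -
    fix i j assume ij: "(i,j) \<in> ?N" and jk: "j \<in> J k"
    hence h: "Suc r \<le> j" "j < m" "i = j - Suc r" "?A $$ (i,j) \<noteq> 0" by (auto simp: np_mem)
    have im: "i < m" using h by auto
    have "g j = Suc (g i)" using blA h im unfolding Bl_def by blast
    moreover have "g j = k" using g_eq k jk by auto
    ultimately have "g i = k - 1" by simp
    hence iJ: "i \<in> J (k-1)" using g_prop[OF im] by simp
    have "i \<notin> Jt"
    proof
      assume "i \<in> Jt"
      then obtain i' where "(i',i) \<in> Pf" using Jt by auto
      moreover have "(i,j) \<in> Pf" using NPf ij by auto
      ultimately show False using D1 by blast
    qed
    thus "i \<in> J (k-1) - Jt" using iJ by simp
  qed
  have N1: "?N' \<subseteq> {p \<in> ?N. snd p \<in> J k}"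
  proof (rule subsetI)
    fix p assume p: "p \<in> ?N'"
    obtain i j where pij: "p = (i,j)" by force
    have h: "Suc r \<le> j" "j < m" "i = j - Suc r" "?A' $$ (i,j) \<noteq> 0" "\<forall>i'. (i',j) \<notin> ?P'"
      using p pij by (auto simp: np_mem)
    have im: "i < m" using h by auto
    have c: "i \<in> J (k-1) - Jt" "j \<in> J k" using cA'[OF im h(2) h(4)] by auto
    have "\<forall>i'. (i',j) \<notin> ?P" using h(5) IHa c(2) by auto
    moreover have "?A $$ (i,j) \<noteq> 0" using IHb[OF c] h by simp
    ultimately show "p \<in> {p \<in> ?N. snd p \<in> J k}" using h c pij by (auto simp: np_mem)
  qed
  have N2: "{p \<in> ?N. snd p \<in> J k} \<subseteq> ?N'"
  proof (rule subsetI)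
    fix p assume p: "p \<in> {p \<in> ?N. snd p \<in> J k}"
    obtain i j where pij: "p = (i,j)" by force
    have jk: "j \<in> J k" using p pij by auto
    have h: "Suc r \<le> j" "j < m" "i = j - Suc r" "?A $$ (i,j) \<noteq> 0" "\<forall>i'. (i',j) \<notin> ?P"
      using p pij by (auto simp: np_mem)
    have iJ: "i \<in> J (k-1) - Jt" using Nrow p pij by auto
    have "?A' $$ (i,j) \<noteq> 0" using IHb[OF iJ jk] h by simp
    moreover have "\<forall>i'. (i',j) \<notin> ?P'" using h(5) IHa by auto
    ultimately show "p \<in> ?N'" using h pij by (auto simp: np_mem)
  qed
  have Neq: "?N' = {p \<in> ?N. snd p \<in> J k}" using N1 N2 by (rule equalityI)
  have a: "snd (rca m Dk (Suc r)) = {p \<in> snd (rca m D (Suc r)). snd p \<in> J k}"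
    unfolding rca_Suc_snd using IHa Neq by auto
  have b: "\<forall>i\<in>J (k-1) - Jt. \<forall>j\<in>J k. fst (rca m D (Suc r)) $$ (i,j) = fst (rca m Dk (Suc r)) $$ (i,j)"
  proof (cases "Suc r \<le> m - 2")
    case False
    thus ?thesis unfolding rca_Suc_fst using IHb by simp
  next
    case True
    let ?C = "snd ` ?N" and ?C' = "snd ` ?N'"
    have fin: "finite ?N" "finite ?N'" by (rule np_finite)+
    have sub: "?C \<subseteq> {..<m}" "?C' \<subseteq> {..<m}" by (rule np_sub)+
    let ?B = "Bm m ?A ?N (Suc r)" and ?B' = "Bm m ?A' ?N' (Suc r)"
    have C'sub: "?C' \<subseteq> ?C \<inter> J k" using Neq by auto
    have Nk: "\<And>x q. q \<in> J k \<Longrightarrow> x < m \<Longrightarrow> Nm ?A ?C (Suc r) x q \<noteq> 0 \<Longrightarrow> x \<in> J k"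
    proof -
      fix x q assume qk: "q \<in> J k" and xm: "x < m" and nz: "Nm ?A ?C (Suc r) x q \<noteq> 0"
      from Nm_nz[OF nz] have h: "?A $$ (x - Suc r, q) \<noteq> 0" "?A $$ (x - Suc r, x) \<noteq> 0" by auto
      have qm: "q < m" using qk Jk by auto
      have "g q = g x" using blA h xm qm unfolding Bl_def by (metis less_imp_diff_less)
      moreover have "g q = k" using g_eq k qk by auto
      ultimately show "x \<in> J k" using g_prop[OF xm] by simp
    qed
    have Nq: "\<And>x q. q \<in> J k \<Longrightarrow> x < m \<Longrightarrow> Nm ?A ?C (Suc r) x q = Nm ?A' ?C' (Suc r) x q"
    proof -
      fix x q assume qk: "q \<in> J k" and xm: "x < m"
      show "Nm ?A ?C (Suc r) x q = Nm ?A' ?C' (Suc r) x q"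
      proof (cases "x \<in> ?C \<and> x \<in> J k \<and> x < q")
        case True
        hence xN: "(x - Suc r, x) \<in> ?N" by (auto simp: np_mem np_snd)
        hence xN': "(x - Suc r, x) \<in> ?N'" using Neq True by auto
        hence xC': "x \<in> ?C'" by force
        have row: "x - Suc r \<in> J (k-1) - Jt" using Nrow[OF xN] True by auto
        show ?thesis using True xC' IHb[OF row qk] IHb[OF row] by (simp add: Nm_def nc_def)
      next
        case False
        have z1: "Nm ?A ?C (Suc r) x q = 0"
        proof (rule ccontr)
          assume nz: "Nm ?A ?C (Suc r) x q \<noteq> 0"
          from Nk[OF qk xm nz] Nm_nz[OF nz] False show False by auto
        qed
        have z2: "Nm ?A' ?C' (Suc r) x q = 0" using False C'sub by (auto simp: Nm_def)
        show ?thesis using z1 z2 by simp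
      qed
    qed
    show ?thesis
    proof (intro ballI)
      fix i j assume iJ: "i \<in> J (k-1) - Jt" and jk: "j \<in> J k"
      have im: "i < m" and jm: "j < m" using iJ jk Jk by auto
      have iC: "i \<notin> ?C"
      proof
        assume "i \<in> ?C"
        then obtain i' where "(i',i) \<in> ?N" by force
        hence "(i',i) \<in> Pf" using NPf by auto
        thus False using iJ Jt by auto
      qed
      have iC': "i \<notin> ?C'" using C'sub iJ disj by auto
      have Beq: "\<And>q. q \<in> J k \<Longrightarrow> ?B $$ (i,q) = ?B' $$ (i,q)"
      proof -
        fix q assume "q \<in> J k" thus "?B $$ (i,q) = ?B' $$ (i,q)"
        proof (induction q rule: less_induct)
          case (less q)
          have qm: "q < m" using less.prems Jk by auto
          have e1: "?A $$ (i,q) = ?B $$ (i,q) + (\<Sum>x<m. ?B $$ (i,x) * Nm ?A ?C (Suc r) x q)"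
            by (rule A_entry[OF Ac fin(1) sub(1) im qm])
          have e2: "?A' $$ (i,q) = ?B' $$ (i,q) + (\<Sum>x<m. ?B' $$ (i,x) * Nm ?A' ?C' (Suc r) x q)"
            by (rule A_entry[OF A'c fin(2) sub(2) im qm])
          have "(\<Sum>x<m. ?B $$ (i,x) * Nm ?A ?C (Suc r) x q) = (\<Sum>x<m. ?B' $$ (i,x) * Nm ?A' ?C' (Suc r) x q)"
          proof (rule sum.cong)
            fix x assume "x \<in> {..<m}"
            hence xm: "x < m" by simp
            show "?B $$ (i,x) * Nm ?A ?C (Suc r) x q = ?B' $$ (i,x) * Nm ?A' ?C' (Suc r) x q"
            proof (cases "Nm ?A ?C (Suc r) x q = 0")
              case True thus ?thesis using Nq[OF less.prems xm] by simp
            next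
              case False
              have "x \<in> J k" by (rule Nk[OF less.prems xm False])
              moreover have "x < q" using Nm_nz[OF False] by auto
              ultimately have "?B $$ (i,x) = ?B' $$ (i,x)" using less.IH by blast
              thus ?thesis using Nq[OF less.prems xm] by simp
            qed
          qed simp
          moreover have "?A $$ (i,q) = ?A' $$ (i,q)" using IHb[OF iJ less.prems] .
          ultimately show ?case using e1 e2 by simp
        qed
      qed
      have u1: "rca_update m ?A ?N (Suc r) $$ (i,j) = ?B $$ (i,j)"
        using upd_entry[OF Ac fin(1) sub(1) im jm] iC by (simp add: Nm_def)
      have u2: "rca_update m ?A' ?N' (Suc r) $$ (i,j) = ?B' $$ (i,j)"
        using upd_entry[OF A'c fin(2) sub(2) im jm] iC' by (simp add: Nm_def)
      show "fst (rca m D (Suc r)) $$ (i,j) = fst (rca m Dk (Suc r)) $$ (i,j)"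
        unfolding rca_Suc_fst using True u1 u2 Beq[OF jk] by simp
    qed
  qed
  show ?case using a b by blast
qed

lemma H: "k \<le> b \<Longrightarrow> bs_cols m D J k = {x \<in> J k. \<exists>i. (i,x) \<in> Pf}"
proof (induction k)
  case 0
  have "\<And>x i. x \<in> J 0 \<Longrightarrow> (i,x) \<in> Pf \<Longrightarrow> False"
  proof -
    fix x i assume "x \<in> J 0" "(i,x) \<in> Pf"
    thus False using Pf_blk g_eq[of 0 x] by fastforce
  qed
  thus ?case by auto
next
  case (Suc k)
  hence IH: "bs_cols m D J k = {x \<in> J (Suc k - 1). \<exists>i. (i,x) \<in> Pf}" by simp
  have "snd (rca m (block_restrict m D (J (Suc k - 1)) (bs_cols m D J k) (J (Suc k))) (m-1)) =
      {p \<in> snd (rca m D (m-1)). snd p \<in> J (Suc k)}"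
    using sim[of "Suc k" "bs_cols m D J k" "m - 1"] IH Suc.prems by auto
  hence "rca_pivots m (block_restrict m D (J k) (bs_cols m D J k) (J (Suc k))) = {p \<in> Pf. snd p \<in> J (Suc k)}"
    unfolding rca_pivots_def by simp
  thus ?case by force
qed

lemma main:
  shows "(\<forall>k\<in>{1..b}. \<forall>i\<in>J (k-1). \<forall>j\<in>J k.
            rca_final m D $$ (i,j) = rca_final m (bs_block m D J k) $$ (i,j))
         \<and> rca_pivots m D = (\<Union>k\<in>{1..b}. rca_pivots m (bs_block m D J k))"
proof -
  define Jt where "Jt k = {x \<in> J (k-1). \<exists>i. (i,x) \<in> Pf}" for k
  have bb: "\<And>k. k \<in> {1..b} \<Longrightarrow> bs_block m D J k = block_restrict m D (J (k-1)) (Jt k) (J k)"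
    unfolding bs_block_def Jt_def using H by auto
  have S: "\<And>k. k \<in> {1..b} \<Longrightarrow> rca_pivots m (bs_block m D J k) = {p \<in> Pf. snd p \<in> J k} \<and>
      (\<forall>i\<in>J (k-1) - Jt k. \<forall>j\<in>J k. Af $$ (i,j) = rca_final m (bs_block m D J k) $$ (i,j))"
    unfolding rca_pivots_def rca_final_def using bb sim[OF _ _ Jt_def, of _ "m-1"] by auto
  have part1: "\<forall>k\<in>{1..b}. \<forall>i\<in>J (k-1). \<forall>j\<in>J k.
            rca_final m D $$ (i,j) = rca_final m (bs_block m D J k) $$ (i,j)"
  proof (intro ballI)
    fix k i j assume k: "k \<in> {1..b}" and iJ: "i \<in> J (k-1)" and jk: "j \<in> J k"
    have kb: "k - 1 \<le> b" "k \<le> b" using k by auto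
    have j1: "J (k-1) \<subseteq> {..<m}" "J k \<subseteq> {..<m}" using Jsub[OF kb(1)] Jsub[OF kb(2)] by auto
    have im: "i < m" and jm: "j < m" using j1 iJ jk by auto
    show "Af $$ (i,j) = rca_final m (bs_block m D J k) $$ (i,j)"
    proof (cases "i \<in> Jt k")
      case False thus ?thesis using S[OF k] iJ jk by auto
    next
      case True
      then obtain i' where "(i',i) \<in> Pf" unfolding Jt_def by auto
      hence z1: "Af $$ (i,j) = 0" using FI jm unfolding FinalInv_def by blast
      have z2: "rca_final m (bs_block m D J k) $$ (i,j) = 0"
      proof (rule ccontr)
        assume "rca_final m (bs_block m D J k) $$ (i,j) \<noteq> 0"
        hence nz: "fst (rca m (block_restrict m D (J (k-1)) (Jt k) (J k)) (m-1)) $$ (i,j) \<noteq> 0"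
          using bb[OF k] unfolding rca_final_def by simp
        have k1: "1 \<le> k" "k \<le> b" using k by auto
        have "i \<in> J (k-1) - Jt k" by (rule conjunct1[OF sim_c[OF k1 im jm nz]])
        thus False using True by simp
      qed
      show ?thesis using z1 z2 by simp
    qed
  qed
  have p21: "Pf \<subseteq> (\<Union>k\<in>{1..b}. rca_pivots m (bs_block m D J k))"
  proof (rule subsetI)
    fix p assume p: "p \<in> Pf"
    obtain i j where pij: "p = (i,j)" by force
    have h: "i < m" "j < m" "g j = Suc (g i)" using Pf_blk p pij by auto
    have "g j \<in> {1..b}" "j \<in> J (g j)" using g_prop[OF h(2)] h by auto
    thus "p \<in> (\<Union>k\<in>{1..b}. rca_pivots m (bs_block m D J k))" using S p pij by auto
  qed
  have p22: "(\<Union>k\<in>{1..b}. rca_pivots m (bs_block m D J k)) \<subseteq> Pf"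
    using S by auto
  have part2: "Pf = (\<Union>k\<in>{1..b}. rca_pivots m (bs_block m D J k))"
    using p21 p22 by (rule equalityI)
  show ?thesis using part1 part2 by blast
qed

end

theorem mainTheorem14:
  fixes D :: "'a::field mat" and m b :: nat and J :: "nat \<Rightarrow> nat set"
  assumes "m \<ge> 1"
    and "connection_matrix m b J D"
  shows "(\<forall>k\<in>{1..b}. \<forall>i\<in>J (k-1). \<forall>j\<in>J k.
            rca_final m D $$ (i,j) = rca_final m (bs_block m D J k) $$ (i,j))
         \<and> rca_pivots m D = (\<Union>k\<in>{1..b}. rca_pivots m (bs_block m D J k))"
proof -
  interpret cm_setup m b J D using assms by unfold_locales
  show ?thesis by (rule main)
qed

end
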